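(* Let $w$ be a word and $TG(w) = (V, E_1, \dots, E_T)$ the temporal graph it represents, with start points $S_1 < \dots < S_T$, and suppose $TG(w)$ is connected in every timestep. Then for every vertex $v_x \in V$: $x \in \mathrm{letters}(w[S_t, S_{t+d(v_x)+1} - 1])$ for all $t \in [1, T - d(v_x) - 2]$, and $x \in \mathrm{letters}(w[S_{T - d(v_x) - 1}, |w|])$.
   Context: Words are over $\Sigma=\{1,\dots,n\}$; $w[i]$ is the $i$-th letter, $w[i,j]$ the factor $w[i]\cdots w[j]$, $\mathrm{letters}(u)$ the set of symbols occurring in $u$, $\pi_{\mathcal S}(w)$ the subsequence of $w$ of all occurrences of symbols in $\mathcal S$. Symbols $x,y$ alternate in $w$ if $\pi_{\{x,y\}}(w) \in \{(xy)^k, (xy)^kx, (yx)^k, (yx)^ky : k \ge 0\}$. $G(w)$ has vertex set $V=\{v_1,\dots,v_n\}$ and undirected edge $(v_x,v_y)$ iff $x\neq y$ alternate in $w$; $d(v)$ is the degree of $v$ in $G(w)$. Start points: $S_1=1$, and $S_i$ is the least index $j>S_{i-1}$ with $w[j] \in \mathrm{letters}(w[S_{i-1},j-1])$; $S_1<\dots<S_T$ are all start points. The $t$-th timestep factor is $w[S_t,S_{t+1}-1]$ ($t<T$) or $w[S_T,|w|]$ ($t=T$). $TG(w)=(V,E_1,\dots,E_T)$ with $E_t$ the set of edges $(v_x,v_y)$ of $G(w)$ with $x$ or $y$ occurring in the $t$-th timestep factor. Connected in every timestep means $(V,E_t)$ is connected for all $t$. *)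

theory Defs
  imports Main
begin

text \<open>Words are lists of naturals over the alphabet {1..n}; positions are 1-based:
  w[i] = w ! (i - 1).\<close>

definition letter :: "nat list \<Rightarrow> nat \<Rightarrow> nat" where
  "letter w i = w ! (i - 1)"

definition letters :: "nat list \<Rightarrow> nat \<Rightarrow> nat \<Rightarrow> nat set" where
  "letters w i j = {letter w k | k. i \<le> k \<and> k \<le> j \<and> 1 \<le> k \<and> k \<le> length w}"

definition proj :: "nat set \<Rightarrow> nat list \<Rightarrow> nat list" where
  "proj S w = filter (\<lambda>c. c \<in> S) w"

definition alternate :: "nat list \<Rightarrow> nat \<Rightarrow> nat \<Rightarrow> bool" where
  "alternate w x y \<longleftrightarrow> (\<exists>k. proj {x, y} w = concat (replicate k [x, y])
      \<or> proj {x, y} w = concat (replicate k [x, y]) @ [x]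
      \<or> proj {x, y} w = concat (replicate k [y, x])
      \<or> proj {x, y} w = concat (replicate k [y, x]) @ [y])"

text \<open>Edges of G(w) on vertex set {1..n} (vertex v_x identified with x).\<close>
definition gedge :: "nat \<Rightarrow> nat list \<Rightarrow> nat \<Rightarrow> nat \<Rightarrow> bool" where
  "gedge n w x y \<longleftrightarrow> x \<in> {1..n} \<and> y \<in> {1..n} \<and> x \<noteq> y \<and> alternate w x y"

definition degree :: "nat \<Rightarrow> nat list \<Rightarrow> nat \<Rightarrow> nat" where
  "degree n w x = card {y. gedge n w x y}"

definition has_next :: "nat list \<Rightarrow> nat \<Rightarrow> bool" where
  "has_next w s \<longleftrightarrow> (\<exists>j. s < j \<and> j \<le> length w \<and> letter w j \<in> letters w s (j - 1))"

definition next_start :: "nat list \<Rightarrow> nat \<Rightarrow> nat" where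
  "next_start w s = (LEAST j. s < j \<and> j \<le> length w \<and> letter w j \<in> letters w s (j - 1))"

text \<open>st w i = S_{i+1}; after the last start point the value is irrelevant (|w|+1).\<close>
primrec st :: "nat list \<Rightarrow> nat \<Rightarrow> nat" where
  "st w 0 = 1"
| "st w (Suc i) = (if has_next w (st w i) then next_start w (st w i) else length w + 1)"

definition S :: "nat list \<Rightarrow> nat \<Rightarrow> nat" where
  "S w i = st w (i - 1)"

definition T :: "nat list \<Rightarrow> nat" where
  "T w = (LEAST i. 1 \<le> i \<and> \<not> has_next w (S w i))"

definition step_letters :: "nat list \<Rightarrow> nat \<Rightarrow> nat set" where
  "step_letters w t = (if t < T w then letters w (S w t) (S w (Suc t) - 1)
                       else letters w (S w (T w)) (length w))"

definition tedge :: "nat \<Rightarrow> nat list \<Rightarrow> nat \<Rightarrow> nat \<Rightarrow> nat \<Rightarrow> bool" where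
  "tedge n w t x y \<longleftrightarrow> gedge n w x y \<and> (x \<in> step_letters w t \<or> y \<in> step_letters w t)"

definition connected_on :: "nat set \<Rightarrow> (nat \<Rightarrow> nat \<Rightarrow> bool) \<Rightarrow> bool" where
  "connected_on V E \<longleftrightarrow> (\<forall>u\<in>V. \<forall>v\<in>V. (\<lambda>a b. a \<in> V \<and> b \<in> V \<and> E a b)\<^sup>*\<^sup>* u v)"

definition connected_every_timestep :: "nat \<Rightarrow> nat list \<Rightarrow> bool" where
  "connected_every_timestep n w \<longleftrightarrow> (\<forall>t. 1 \<le> t \<and> t \<le> T w \<longrightarrow> connected_on {1..n} (tedge n w t))"

end

theory Submission
  imports Defs
begin

lemma S_step:
  assumes "1 \<le> i" "i < T w"
  shows "has_next w (S w i) \<and> S w (Suc i) = next_start w (S w i)"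
proof -
  have h: "has_next w (S w i)"
    using not_less_Least[of i "\<lambda>i. 1 \<le> i \<and> \<not> has_next w (S w i)"] assms
    unfolding T_def by blast
  have "S w (Suc i) = st w (Suc (i - 1))" using assms by (simp add: S_def)
  also have "\<dots> = next_start w (S w i)" using h by (simp add: S_def)
  finally show ?thesis using h by simp
qed

lemma next_start_props:
  assumes "has_next w s"
  shows "s < next_start w s \<and> next_start w s \<le> length w"
proof -
  from assms obtain j where "s < j \<and> j \<le> length w \<and> letter w j \<in> letters w s (j - 1)"
    unfolding has_next_def by blast
  then have "s < next_start w s \<and> next_start w s \<le> length w \<and> letter w (next_start w s) \<in> letters w s (next_start w s - 1)"
    unfolding next_start_def by (rule LeastI)
  then show ?thesis by blast
qed

lemma S_lt_Suc:
  assumes "1 \<le> i" "i < T w"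
  shows "S w i < S w (Suc i) \<and> S w (Suc i) \<le> length w"
  using S_step[OF assms] next_start_props by metis

lemma S_strict:
  assumes "1 \<le> i" "i < j" "j \<le> T w"
  shows "S w i < S w j"
  using assms
proof (induction j)
  case 0 then show ?case by simp
next
  case (Suc j)
  show ?case
  proof (cases "i = j")
    case True then show ?thesis using S_lt_Suc[of j w] Suc.prems by simp
  next
    case False
    then have "S w i < S w j" using Suc by simp
    moreover have "S w j < S w (Suc j)" using S_lt_Suc[of j w] Suc.prems False by simp
    ultimately show ?thesis by simp
  qed
qed

lemma S_mono:
  assumes "1 \<le> i" "i \<le> j" "j \<le> T w"
  shows "S w i \<le> S w j"
  using S_strict[of i j w] assms by (cases "i = j") auto

lemma S_one: "S w 1 = 1" by (simp add: S_def)

definition alt :: "nat \<Rightarrow> nat \<Rightarrow> nat list \<Rightarrow> bool" where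
  "alt a b L \<longleftrightarrow> (\<forall>i<length L. L ! i = (if even i then a else b))"

lemma alt_rep: "alt a b (concat (replicate k [a, b]))"
  unfolding alt_def
proof (induction k)
  case 0 then show ?case by simp
next
  case (Suc k)
  show ?case
  proof (intro allI impI)
    fix i assume "i < length (concat (replicate (Suc k) [a, b]))"
    then show "concat (replicate (Suc k) [a, b]) ! i = (if even i then a else b)"
      using Suc by (cases i; cases "i - 1") (auto simp: length_concat)
  qed
qed

lemma length_rep: "length (concat (replicate k [a, b])) = 2 * k"
  by (induction k) auto

lemma alt_rep2: "alt a b (concat (replicate k [a, b]) @ [a])"
  unfolding alt_def
proof (intro allI impI)
  fix i assume "i < length (concat (replicate k [a, b]) @ [a])"
  then have "i < 2 * k \<or> i = 2 * k" by (simp add: length_rep less_Suc_eq)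
  then show "(concat (replicate k [a, b]) @ [a]) ! i = (if even i then a else b)"
  proof
    assume "i < 2 * k" then show ?thesis
      using alt_rep[of a b k] unfolding alt_def by (simp add: nth_append length_rep)
  next
    assume "i = 2 * k" then show ?thesis by (simp add: nth_append length_rep)
  qed
qed

lemma alt_adj:
  assumes "alt a b L" "a \<noteq> b" "Suc i < length L"
  shows "L ! i \<noteq> L ! Suc i"
  using assms unfolding alt_def by auto

lemma alternate_adj:
  assumes "alternate w x y" "x \<noteq> y" "Suc i < length (proj {x, y} w)"
  shows "proj {x, y} w ! i \<noteq> proj {x, y} w ! Suc i"
proof -
  have "alt x y (proj {x, y} w) \<or> alt y x (proj {x, y} w)"
    using assms(1) alt_rep alt_rep2 unfolding alternate_def by metis
  then show ?thesis using alt_adj assms by (metis)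
qed

lemma no_yy:
  assumes "alternate w x y" "x \<noteq> y" "i < j" "j < length w" "w ! i = y" "w ! j = y"
    and nox: "\<forall>k. i < k \<and> k < j \<longrightarrow> w ! k \<noteq> x"
  shows False
proof -
  define r where "r = drop (Suc i) w"
  define j' where "j' = j - Suc i"
  have w1: "w = take i w @ y # r" using id_take_nth_drop[of i w] assms r_def by simp
  have jl: "j' < length r" using assms unfolding r_def j'_def by simp
  have r1: "r = take j' r @ y # drop (Suc j') r"
    using id_take_nth_drop[OF jl] assms unfolding r_def j'_def by simp
  define m where "m = take j' r"
  have mx: "x \<notin> set m"
  proof
    assume "x \<in> set m"
    then obtain k where k: "k < length m" "m ! k = x" by (auto simp: in_set_conv_nth)
    then have "w ! (Suc i + k) = x" "k < j'" unfolding m_def r_def using jl r_def by auto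
    moreover have "i < Suc i + k" "Suc i + k < j" using \<open>k < j'\<close> j'_def by auto
    ultimately show False using nox by blast
  qed
  have my: "set (filter (\<lambda>c. c \<in> {x, y}) m) \<subseteq> {y}" using mx by auto
  have ww: "w = take i w @ y # m @ y # drop (Suc j') r" using w1 r1 m_def by metis
  define F1 where "F1 = filter (\<lambda>c. c \<in> {x, y}) (take i w)"
  define F2 where "F2 = filter (\<lambda>c. c \<in> {x, y}) (drop (Suc j') r)"
  define M where "M = filter (\<lambda>c. c \<in> {x, y}) m"
  have p: "proj {x, y} w = F1 @ y # M @ y # F2"
    unfolding proj_def F1_def F2_def M_def by (subst ww) simp
  have my': "set M \<subseteq> {y}" using my unfolding M_def .
  have "(M @ y # F2) ! 0 = y"
  proof (cases M)
    case Nil then show ?thesis by simp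
  next
    case (Cons a l) then show ?thesis using my' by simp
  qed
  then have "proj {x, y} w ! length F1 = y" "proj {x, y} w ! Suc (length F1) = y"
    "Suc (length F1) < length (proj {x, y} w)"
    using p by (auto simp: nth_append)
  then show False using alternate_adj[OF assms(1,2)] by metis
qed


lemma letters_mono:
  assumes "a' \<le> a" "b \<le> b'"
  shows "letters w a b \<subseteq> letters w a' b'"
  using assms unfolding letters_def by fastforce

lemma window:
  assumes sw: "set w \<subseteq> {1..n}" and con: "connected_every_timestep n w" and xn: "x \<in> {1..n}"
    and t1: "1 \<le> t" and tT: "t + degree n w x + 1 \<le> T w"
  shows "x \<in> letters w (S w t) (S w (t + degree n w x + 1) - 1)"
proof (rule ccontr)
  define d where "d = degree n w x"
  define N where "N = {y. gedge n w x y}"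
  define E where "E = S w (t + d + 1) - 1"
  define W where "W = {t..t+d}"
  assume "x \<notin> letters w (S w t) (S w (t + degree n w x + 1) - 1)"
  then have nx: "x \<notin> letters w (S w t) E" unfolding E_def d_def .
  have finN: "finite N" unfolding N_def gedge_def by (rule finite_subset[of _ "{1..n}"]) auto
  have cardN: "card N = d" unfolding N_def d_def degree_def ..
  have sl: "\<exists>y\<in>N. y \<in> letters w (S w t') (S w (Suc t') - 1)" if tw: "t' \<in> W" for t'
  proof -
    have t'1: "1 \<le> t'" "t' < T w" using tw t1 tT unfolding W_def d_def by auto
    have stl: "step_letters w t' = letters w (S w t') (S w (Suc t') - 1)"
      using t'1 unfolding step_letters_def by simp
    have "S w t \<le> S w t'" using S_mono[of t t' w] tw t'1 t1 unfolding W_def by auto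
    moreover have "S w (Suc t') \<le> S w (t + d + 1)" using S_mono[of "Suc t'" "t+d+1" w] tw tT
      unfolding W_def d_def by auto
    ultimately have "letters w (S w t') (S w (Suc t') - 1) \<subseteq> letters w (S w t) E"
      unfolding E_def by (intro letters_mono) auto
    then have xs: "x \<notin> step_letters w t'" using nx stl by blast
    have s1: "1 \<le> S w t'" using S_mono[of 1 t' w] t'1 S_one[of w] by simp
    have s2: "S w t' < S w (Suc t')" "S w (Suc t') \<le> length w" using S_lt_Suc[OF t'1] by auto
    define z where "z = letter w (S w t')"
    have zs: "z \<in> step_letters w t'" unfolding stl letters_def z_def using s1 s2 by fastforce
    have "z \<in> set w" unfolding z_def letter_def using s1 s2 by simp
    then have zn: "z \<in> {1..n}" using sw by blast
    have zx: "z \<noteq> x" using zs xs by blast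
    have "connected_on {1..n} (tedge n w t')" using con t'1 unfolding connected_every_timestep_def by simp
    then have "(\<lambda>a b. a \<in> {1..n} \<and> b \<in> {1..n} \<and> tedge n w t' a b)\<^sup>*\<^sup>* x z"
      using xn zn unfolding connected_on_def by blast
    then obtain a where "tedge n w t' x a"
      using zx by (cases rule: converse_rtranclpE) auto
    then show ?thesis using xs stl unfolding tedge_def N_def by auto
  qed
  then have "\<forall>t'\<in>W. \<exists>y. y \<in> N \<and> y \<in> letters w (S w t') (S w (Suc t') - 1)" by blast
  from bchoice[OF this] obtain g where g: "\<forall>t'\<in>W. g t' \<in> N \<and> g t' \<in> letters w (S w t') (S w (Suc t') - 1)"
    by blast
  have distinct: "g t1 \<noteq> g t2" if a: "t1 \<in> W" "t2 \<in> W" "t1 < t2" for t1 t2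
  proof
    assume eq: "g t1 = g t2"
    define y where "y = g t1"
    have t1T: "1 \<le> t1" "t1 < T w" "1 \<le> t2" "t2 < T w" using a t1 tT unfolding W_def d_def by auto
    have gy: "gedge n w x y" using g a(1) unfolding y_def N_def by blast
    have xy: "x \<noteq> y" "alternate w x y" using gy unfolding gedge_def by auto
    have y1: "y \<in> letters w (S w t1) (S w (Suc t1) - 1)" using g a(1) unfolding y_def by blast
    then obtain p1 where p1: "S w t1 \<le> p1" "p1 \<le> S w (Suc t1) - 1" "1 \<le> p1" "p1 \<le> length w" "letter w p1 = y"
      unfolding letters_def by blast
    have y2: "y \<in> letters w (S w t2) (S w (Suc t2) - 1)" using g a(2) eq unfolding y_def by metis
    then obtain p2 where p2: "S w t2 \<le> p2" "p2 \<le> S w (Suc t2) - 1" "1 \<le> p2" "p2 \<le> length w" "letter w p2 = y"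
      unfolding letters_def by blast
    have "S w (Suc t1) \<le> S w t2" using S_mono[of "Suc t1" t2 w] a(3) t1T by simp
    then have p12: "p1 < p2" using p1(2) p2(1) S_lt_Suc[of t1 w] t1T(1,2) by linarith
    have Stt1: "S w t \<le> S w t1" using S_mono[of t t1 w] a(1) t1 t1T unfolding W_def by simp
    have St2E: "S w (Suc t2) - 1 \<le> E" using S_mono[of "Suc t2" "t+d+1" w] a(2) tT t1T
      unfolding W_def d_def E_def by simp
    have nox: "\<forall>k. p1 - 1 < k \<and> k < p2 - 1 \<longrightarrow> w ! k \<noteq> x"
    proof (intro allI impI)
      fix k assume k: "p1 - 1 < k \<and> k < p2 - 1"
      have k1: "S w t \<le> Suc k" "Suc k \<le> E" "1 \<le> Suc k" "Suc k \<le> length w"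
        using k p1(1,3) p2(2,4) Stt1 St2E by linarith+
      have "letter w (Suc k) \<in> letters w (S w t) E"
        unfolding letters_def using k1 by blast
      then show "w ! k \<noteq> x" using nx unfolding letter_def by auto
    qed
    have w1: "w ! (p1 - 1) = y" "w ! (p2 - 1) = y" using p1(5) p2(5) unfolding letter_def by auto
    have "p1 - 1 < p2 - 1" "p2 - 1 < length w" using p12 p1(3) p2(4) by linarith+
    then show False
      using no_yy[OF xy(2) xy(1) _ _ w1 nox] by blast
  qed
  have "inj_on g W"
  proof (rule inj_onI)
    fix a b assume "a \<in> W" "b \<in> W" "g a = g b"
    then show "a = b" using distinct[of a b] distinct[of b a] by (cases a b rule: linorder_cases) auto
  qed
  then have "card (g ` W) = card W" by (rule card_image)
  moreover have "card W = d + 1" unfolding W_def by simp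
  moreover have "card (g ` W) \<le> card N" using g finN by (intro card_mono) auto
  ultimately show False using cardN by simp
qed

theorem lemma1:
  fixes n :: nat and w :: "nat list" and x :: nat
  assumes "set w \<subseteq> {1..n}"
    and "connected_every_timestep n w"
    and "x \<in> {1..n}"
  shows "(\<forall>t. 1 \<le> t \<and> t + degree n w x + 2 \<le> T w \<longrightarrow>
            x \<in> letters w (S w t) (S w (t + degree n w x + 1) - 1))
         \<and> (degree n w x + 2 \<le> T w \<longrightarrow>
            x \<in> letters w (S w (T w - degree n w x - 1)) (length w))"
proof (intro conjI allI impI)
  fix t assume "1 \<le> t \<and> t + degree n w x + 2 \<le> T w"
  then show "x \<in> letters w (S w t) (S w (t + degree n w x + 1) - 1)"
    using window[OF assms] by simp
next
  assume h: "degree n w x + 2 \<le> T w"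
  define t where "t = T w - degree n w x - 1"
  have "1 \<le> t" "t + degree n w x + 1 \<le> T w" using h unfolding t_def by auto
  then have "x \<in> letters w (S w t) (S w (t + degree n w x + 1) - 1)"
    using window[OF assms] by simp
  moreover have "letters w (S w t) (S w (t + degree n w x + 1) - 1) \<subseteq> letters w (S w t) (length w)"
    unfolding letters_def by auto
  ultimately show "x \<in> letters w (S w (T w - degree n w x - 1)) (length w)" unfolding t_def by blast
qed

end
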